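(* Let $X^*$ be an optimal solution of the program defining $\vartheta^+(G)$. Then $X^*e=\vartheta^+(G)\operatorname{diag}(X^* )$.
   Context: Let $G$ be a simple graph with vertex set $V=\{1,\dots,n\}$ and edge set $E$; $e$ is the all-ones vector and $X\geq 0$ means entrywise nonnegativity. Schrijver's number is $$\vartheta^+(G)=\max\ \operatorname{trace}(X)\ \text{ s.t. } X-xx^T\succeq 0,\ \operatorname{diag}(X)=x,\ X_{i,j}=0\ \forall [i,j]\in E,\ X\geq 0,$$ which equals $\max \langle J,X\rangle$ s.t. $X\succeq 0$, $\operatorname{trace}(X)=1$, $X_{i,j}=0$ for $[i,j]\in E$, $X\geq 0$, where $J$ is the all-ones matrix. *)

theory Defs
  imports "HOL-Analysis.Analysis"
begin

text \<open>Vertices are the elements of a finite type 'n (so V = {1..n} up to renaming, n = CARD('n)).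
  A simple graph is a symmetric irreflexive edge relation E on 'n.\<close>

definition simple_graph :: "('n \<times> 'n) set \<Rightarrow> bool" where
  "simple_graph E \<longleftrightarrow> (\<forall>i j. (i, j) \<in> E \<longrightarrow> (j, i) \<in> E) \<and> (\<forall>i. (i, i) \<notin> E)"

definition psd :: "real^'n^'n \<Rightarrow> bool" where
  "psd M \<longleftrightarrow> transpose M = M \<and> (\<forall>v. 0 \<le> v \<bullet> (M *v v))"

definition diag_vec :: "real^'n^'n \<Rightarrow> real^'n" where
  "diag_vec X = (\<chi> i. X $ i $ i)"

definition outer :: "real^'n \<Rightarrow> real^'n \<Rightarrow> real^'n^'n" where
  "outer x y = (\<chi> i j. x $ i * y $ j)"

definition ones :: "real^'n" where
  "ones = (\<chi> i. 1)"

definition theta_plus_feasible :: "('n \<times> 'n) set \<Rightarrow> real^'n^'n \<Rightarrow> real^'n \<Rightarrow> bool" where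
  "theta_plus_feasible E X x \<longleftrightarrow>
     psd (X - outer x x) \<and> diag_vec X = x \<and>
     (\<forall>i j. (i, j) \<in> E \<longrightarrow> X $ i $ j = 0) \<and>
     (\<forall>i j. 0 \<le> X $ i $ j)"

definition theta_plus :: "('n::finite \<times> 'n) set \<Rightarrow> real" where
  "theta_plus E = Sup {trace X | X x. theta_plus_feasible E X x}"

definition theta_plus_optimal :: "('n::finite \<times> 'n) set \<Rightarrow> real^'n^'n \<Rightarrow> real^'n \<Rightarrow> bool" where
  "theta_plus_optimal E X x \<longleftrightarrow> theta_plus_feasible E X x \<and>
     (\<forall>Y y. theta_plus_feasible E Y y \<longrightarrow> trace Y \<le> trace X)"

end

theory Submission
  imports Defs
begin


lemma quad_disc:
  fixes a b c :: real
  assumes h: "\<And>t. 0 \<le> a + 2*t*b + t^2*c" and c0: "0 \<le> c"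
  shows "b^2 \<le> a*c"
proof -
  have a0: "0 \<le> a" using h[of 0] by simp
  show ?thesis
  proof (cases "c = 0")
    case True
    show ?thesis
    proof (rule ccontr)
      assume "\<not> ?thesis"
      hence b0: "b \<noteq> 0" using True by simp
      have "0 \<le> a + 2*(-(a+1)/(2*b))*b" using h[of "-(a+1)/(2*b)"] True by simp
      also have "\<dots> = -1" using b0 by (simp add: field_simps)
      finally show False by simp
    qed
  next
    case False
    hence cp: "c > 0" using c0 by simp
    have "0 \<le> a + 2*(-b/c)*b + (-b/c)^2*c" by (rule h)
    also have "\<dots> = a - b^2/c" using cp by (simp add: field_simps power2_eq_square)
    finally have "b^2/c \<le> a" by simp
    thus ?thesis using cp by (simp add: field_simps mult.commute)
  qed
qed

lemma sym_dot:
  fixes A :: "real^'n^'n"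
  assumes "transpose A = A"
  shows "u \<bullet> (A *v w) = w \<bullet> (A *v u)"
proof -
  have "u \<bullet> (A *v w) = (u v* A) \<bullet> w" by (simp add: dot_lmul_matrix)
  also have "u v* A = transpose A *v u" by simp
  finally show ?thesis using assms by (simp add: inner_commute)
qed

lemma psd_cs:
  fixes A :: "real^'n^'n"
  assumes "psd A"
  shows "(u \<bullet> (A *v w))^2 \<le> (u \<bullet> (A *v u)) * (w \<bullet> (A *v w))"
proof (rule quad_disc)
  show "0 \<le> w \<bullet> (A *v w)" using assms by (simp add: psd_def)
next
  fix t :: real
  have s: "transpose A = A" and q: "\<And>v. 0 \<le> v \<bullet> (A *v v)" using assms by (auto simp: psd_def)
  have "0 \<le> (u + t *\<^sub>R w) \<bullet> (A *v (u + t *\<^sub>R w))" by (rule q)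
  also have "\<dots> = u \<bullet> (A *v u) + t * (u \<bullet> (A *v w)) + t * (w \<bullet> (A *v u)) + t^2 * (w \<bullet> (A *v w))"
    by (simp add: matrix_vector_right_distrib matrix_vector_mult_scaleR inner_add_left inner_add_right power2_eq_square algebra_simps)
  finally show "0 \<le> u \<bullet> (A *v u) + 2 * t * (u \<bullet> (A *v w)) + t^2 * (w \<bullet> (A *v w))"
    using sym_dot[OF s, of u w] by simp
qed


lemma outer_mult: "outer x y *v v = (y \<bullet> v) *\<^sub>R x"
  by (simp add: vec_eq_iff outer_def matrix_vector_mult_def inner_vec_def sum_distrib_left mult_ac)

lemma transpose_outer: "transpose (outer x x) = outer x x"
  by (simp add: vec_eq_iff outer_def transpose_def mult.commute)

lemma transpose_diff: "transpose (A - B) = transpose A - (transpose B :: real^'n^'n)"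
  by (simp add: vec_eq_iff transpose_def)

lemma inner_ones: "ones \<bullet> v = (\<Sum>i\<in>UNIV. v $ i)"
  by (simp add: ones_def inner_vec_def)

lemma basis_inner: "(\<chi> j. if j = i then 1 else 0) \<bullet> (v::real^'n) = v $ i"
proof -
  have "(\<lambda>j. (\<chi> j. if j = i then 1 else 0) $ j * v $ j) = (\<lambda>j. if j = i then v $ j else 0)" by auto
  have "(\<chi> j. if j = i then 1 else 0) \<bullet> v = (\<Sum>j\<in>UNIV. if j = i then v$j else (0::real))"
    unfolding inner_vec_def inner_real_def by (rule sum.cong) auto
  thus ?thesis by simp
qed

lemma basis_quad: "(\<chi> j. if j = i then 1 else 0) \<bullet> ((X::real^'n^'n) *v (\<chi> j. if j = i then 1 else 0)) = X $ i $ i"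
  by (simp add: basis_inner matrix_vector_mult_def if_distrib cong: if_cong)

lemma quad_scale:
  fixes X :: "real^'n^'n" and d v :: "real^'n"
  shows "v \<bullet> ((\<chi> i j. d$i * d$j * X$i$j) *v v) = (\<chi> i. d$i * v$i) \<bullet> (X *v (\<chi> i. d$i * v$i))"
  by (simp add: inner_vec_def matrix_vector_mult_def sum_distrib_left mult_ac)

theorem mainTheorem11:
  fixes E :: "('n::finite \<times> 'n) set" and X :: "real^'n^'n" and x :: "real^'n"
  assumes "simple_graph E"
    and "theta_plus_optimal E X x"
  shows "X *v ones = theta_plus E *\<^sub>R diag_vec X"
proof -
  have feas: "theta_plus_feasible E X x" and opt: "\<And>Y y. theta_plus_feasible E Y y \<Longrightarrow> trace Y \<le> trace X"
    using assms(2) by (auto simp: theta_plus_optimal_def)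
  define M where "M = X - outer x x"
  have psdM: "psd M" and dgv: "diag_vec X = x" and edge: "\<And>i j. (i, j) \<in> E \<Longrightarrow> X $ i $ j = 0"
    and nn: "\<And>i j. 0 \<le> X $ i $ j"
    using feas by (auto simp: theta_plus_feasible_def M_def)
  have dg: "\<And>i. X $ i $ i = x $ i" using dgv by (auto simp: diag_vec_def vec_eq_iff)
  have XM: "X = M + outer x x" by (simp add: M_def)
  have Xv: "\<And>v. X *v v = M *v v + (x \<bullet> v) *\<^sub>R x"
    by (simp add: XM matrix_vector_mult_add_rdistrib outer_mult inner_commute)
  have qX: "\<And>v. v \<bullet> (X *v v) = v \<bullet> (M *v v) + (x \<bullet> v)^2"
    by (simp add: Xv inner_add_right power2_eq_square inner_commute)
  have symM: "transpose M = M" and qM: "\<And>v. 0 \<le> v \<bullet> (M *v v)" using psdM by (auto simp: psd_def)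
  have symX: "transpose X = X"
  proof -
    have "transpose X = transpose M + transpose (outer x x)" unfolding XM
      by (simp add: vec_eq_iff transpose_def)
    thus ?thesis using symM transpose_outer XM by simp
  qed
  have psdX: "psd X" unfolding psd_def using symX qX qM by (simp add: add_nonneg_nonneg)
  have Xsym: "\<And>i j. X $ i $ j = X $ j $ i"
    using symX by (metis transpose_def vec_lambda_beta)
  define \<theta> where "\<theta> = trace X"
  have th: "\<theta> = ones \<bullet> x" by (simp add: \<theta>_def trace_def inner_ones dg)
  have xnn: "\<And>i. 0 \<le> x $ i" using nn dg by metis
  have th0: "0 \<le> \<theta>" by (simp add: th inner_ones sum_nonneg xnn)
  define u where "u = X *v ones"
  define s where "s = ones \<bullet> u"
  have unn: "\<And>i. 0 \<le> u $ i" by (simp add: u_def matrix_vector_mult_def ones_def sum_nonneg nn)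
  have s_sum: "s = (\<Sum>i\<in>UNIV. u $ i)" by (simp add: s_def inner_ones)
  have sq: "ones \<bullet> (M *v ones) = s - \<theta>^2"
    using qX[of ones] by (simp add: s_def u_def th inner_commute)
  have step1: "\<theta>^2 \<le> s" using sq qM[of ones] by simp
  have ux0: "\<And>i. x $ i = 0 \<Longrightarrow> u $ i = 0"
  proof -
    fix i assume xi: "x $ i = 0"
    define e where "e = (\<chi> j. if j = i then (1::real) else 0)"
    have "(e \<bullet> (X *v ones))^2 \<le> (e \<bullet> (X *v e)) * (ones \<bullet> (X *v ones))" by (rule psd_cs[OF psdX])
    also have "e \<bullet> (X *v e) = 0" unfolding e_def using basis_quad dg xi by metis
    finally have "(u $ i)^2 \<le> 0" unfolding e_def u_def basis_inner by simp
    thus "u $ i = 0" by simp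
  qed
  have step2: "s \<le> \<theta>^2"
  proof (rule ccontr)
    assume "\<not> s \<le> \<theta>^2"
    hence sg: "\<theta>^2 < s" by simp
    define r where "r = sqrt s"
    have s0: "0 \<le> s" using sg by (smt (verit) zero_le_power2)
    have rr: "r^2 = s" using s0 by (simp add: r_def)
    have rth: "\<theta> < r" unfolding r_def using sg th0 real_less_rsqrt by blast
    define c where "c = (r - \<theta>) / (2*r - \<theta>)"
    have c0: "0 < c" and c1: "c < 1" using rth th0 by (auto simp: c_def field_simps)
    have cid: "c * (2*r - \<theta>) = r - \<theta>" using rth th0 by (simp add: c_def field_simps)
    define b where "b = c / r"
    define a where "a = 1 - c"
    have a0: "0 \<le> a" using c1 by (simp add: a_def)
    have b0: "0 \<le> b" using c0 rth th0 by (simp add: b_def)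
    have br: "b * r = c" using rth th0 by (simp add: b_def)
    define z where "z = a *\<^sub>R x + b *\<^sub>R u"
    have zc: "\<And>i. z $ i = a * x $ i + b * u $ i" by (simp add: z_def)
    have znn: "\<And>i. 0 \<le> z $ i" using a0 b0 xnn unn zc by (simp add: add_nonneg_nonneg)
    define d where "d = (\<chi> i. if 0 < x $ i then z $ i / x $ i else 0)"
    have dnn: "\<And>i. 0 \<le> d $ i" using znn xnn by (simp add: d_def)
    have dx: "\<And>i. d $ i * x $ i = z $ i"
    proof -
      fix i show "d $ i * x $ i = z $ i"
      proof (cases "0 < x $ i")
        case True thus ?thesis by (simp add: d_def)
      next
        case False
        hence "x $ i = 0" using xnn[of i] by simp
        thus ?thesis using ux0 by (simp add: d_def zc)
      qed
    qed
    define Y where "Y = (\<chi> i j. d$i * d$j * X$i$j)"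
    define y where "y = (\<chi> i. (d$i)^2 * x$i)"
    have psdY: "psd (Y - outer y y)"
      unfolding psd_def
    proof (intro conjI allI)
      show "transpose (Y - outer y y) = Y - outer y y"
        by (simp add: vec_eq_iff transpose_def Y_def outer_def Xsym mult_ac)
    next
      fix v :: "real^'n"
      define w where "w = (\<chi> i. d$i * v$i)"
      define q where "q = w \<bullet> (X *v w)"
      have yv: "y \<bullet> v = z \<bullet> w"
        by (simp add: y_def w_def inner_vec_def power2_eq_square dx[symmetric] mult_ac)
      have lhs: "v \<bullet> ((Y - outer y y) *v v) = q - (z \<bullet> w)^2"
        by (simp add: matrix_vector_mult_diff_rdistrib outer_mult inner_diff_right Y_def quad_scale
             q_def w_def yv[unfolded w_def] power2_eq_square inner_commute[of v y])
      have q0: "0 \<le> q" using psdX by (simp add: psd_def q_def)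
      have h1: "(x \<bullet> w)^2 \<le> q" using qX[of w] qM[of w] by (simp add: q_def)
      have "(ones \<bullet> (X *v w))^2 \<le> (ones \<bullet> (X *v ones)) * q" unfolding q_def by (rule psd_cs[OF psdX])
      moreover have "ones \<bullet> (X *v w) = u \<bullet> w" using sym_dot[OF symX, of ones w] by (simp add: u_def inner_commute)
      ultimately have h2: "(u \<bullet> w)^2 \<le> r^2 * q" by (simp add: rr s_def u_def)
      have a1: "\<bar>x \<bullet> w\<bar> \<le> sqrt q" using real_sqrt_le_mono[OF h1] by simp
      have a2: "\<bar>u \<bullet> w\<bar> \<le> r * sqrt q"
      proof -
        have "sqrt ((u \<bullet> w)^2) \<le> sqrt (r^2 * q)" using h2 by (rule real_sqrt_le_mono)
        thus ?thesis using rth th0 by (simp add: real_sqrt_mult)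
      qed
      have zw: "z \<bullet> w = a * (x \<bullet> w) + b * (u \<bullet> w)" by (simp add: z_def inner_add_left)
      have "\<bar>z \<bullet> w\<bar> \<le> a * \<bar>x \<bullet> w\<bar> + b * \<bar>u \<bullet> w\<bar>" unfolding zw using a0 b0
        using abs_triangle_ineq[of "a * (x \<bullet> w)" "b * (u \<bullet> w)"] by (simp add: abs_mult)
      also have "\<dots> \<le> a * sqrt q + b * (r * sqrt q)" using a1 a2 a0 b0
        by (simp add: add_mono mult_left_mono)
      also have "\<dots> = sqrt q" using br by (simp add: a_def algebra_simps)
      finally have "\<bar>z \<bullet> w\<bar> \<le> sqrt q" .
      hence "\<bar>z \<bullet> w\<bar>^2 \<le> (sqrt q)^2" by (rule power_mono) simp
      hence "(z \<bullet> w)^2 \<le> (sqrt q)^2" by simp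
      hence "(z \<bullet> w)^2 \<le> q" using q0 by simp
      thus "0 \<le> v \<bullet> ((Y - outer y y) *v v)" using lhs by simp
    qed
    have dY: "diag_vec Y = y" by (simp add: diag_vec_def Y_def y_def vec_eq_iff dg power2_eq_square)
    have eY: "\<forall>i j. (i, j) \<in> E \<longrightarrow> Y $ i $ j = 0" by (simp add: Y_def edge)
    have nY: "\<forall>i j. 0 \<le> Y $ i $ j" by (simp add: Y_def dnn nn)
    have feasY: "theta_plus_feasible E Y y"
      unfolding theta_plus_feasible_def using psdY dY eY nY by blast
    have tY: "trace Y = (\<Sum>i\<in>UNIV. (d$i)^2 * x$i)" by (simp add: trace_def Y_def dg power2_eq_square mult_ac)
    have termi: "\<And>i. a^2 * x$i + 2*a*b * u$i \<le> (d$i)^2 * x$i"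
    proof -
      fix i show "a^2 * x$i + 2*a*b * u$i \<le> (d$i)^2 * x$i"
      proof (cases "0 < x $ i")
        case True
        have "(d$i)^2 * x$i = (z$i)^2 / x$i" using True by (simp add: d_def power2_eq_square)
        also have "\<dots> = a^2 * x$i + 2*a*b * u$i + (b * u$i)^2 / x$i" using True
          by (simp add: zc field_simps power2_eq_square)
        finally show ?thesis using True by simp
      next
        case False
        hence "x $ i = 0" using xnn[of i] by simp
        thus ?thesis using ux0 by simp
      qed
    qed
    define S where "S = (\<Sum>i\<in>UNIV. (a^2 * x$i + 2*a*b * u$i))"
    have Seq: "S = a^2 * \<theta> + 2*a*b* s"
      by (simp add: S_def th inner_ones s_sum sum.distrib sum_distrib_left)
    have "S \<le> trace Y" unfolding tY S_def by (rule sum_mono[OF termi])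
    hence lo: "a^2 * \<theta> + 2*a*b* s \<le> trace Y" using Seq by simp
    have "a^2 * \<theta> + 2*a*b* s = \<theta> + c * (r - \<theta>)"
    proof -
      have "b * s = b * (r * r)" using rr by (simp add: power2_eq_square)
      also have "\<dots> = (b * r) * r" by (simp add: mult.assoc)
      finally have "b * s = c * r" using br by simp
      hence "a^2 * \<theta> + 2*a*b* s = (1-c)^2*\<theta> + 2*(1-c)*(c*r)" by (simp add: a_def mult.assoc)
      also have "\<dots> = \<theta> + 2*c*(r-\<theta>) - c*(c*(2*r-\<theta>))" by (simp add: algebra_simps power2_eq_square)
      also have "\<dots> = \<theta> + c * (r - \<theta>)" using cid by simp
      finally show ?thesis .
    qed
    moreover have "0 < c * (r - \<theta>)" using c0 rth by simp
    ultimately have "\<theta> < trace Y" using lo by linarith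
    moreover have "trace Y \<le> \<theta>" using opt[OF feasY] by (simp add: \<theta>_def)
    ultimately show False by simp
  qed
  have z0: "ones \<bullet> (M *v ones) = 0" using sq step1 step2 by simp
  have Mz: "M *v ones = 0"
  proof -
    have "((M *v ones) \<bullet> (M *v ones))^2 \<le> ((M *v ones) \<bullet> (M *v (M *v ones))) * (ones \<bullet> (M *v ones))"
      by (rule psd_cs[OF psdM])
    hence "((M *v ones) \<bullet> (M *v ones))^2 \<le> 0" using z0 by simp
    hence "(M *v ones) \<bullet> (M *v ones) = 0" by simp
    thus ?thesis by simp
  qed
  have thp: "theta_plus E = \<theta>"
    unfolding theta_plus_def \<theta>_def
    by (rule cSup_eq_maximum) (use feas opt in auto)
  show ?thesis using Xv[of ones] Mz by (simp add: thp th dgv inner_commute)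
qed

end
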